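(* Let $\kappa$ be an uncountable regular cardinal and $\mu$ a cardinal with $\mu=\mu^{<\kappa}<2^\kappa$. Assume that every subset of ${}^\kappa\kappa$ of cardinality $\mu$ is a $\mathbf{\Sigma}^1_1$-subset. Then every continuous image of a closed subset of ${}^\kappa\mu$ (i.e. every set of the form $\mathrm{ran}(f)$ where $A\subseteq{}^\kappa\mu$ is closed and $f:A\to{}^\kappa\kappa$ is continuous) is a $\mathbf{\Sigma}^1_1$-subset of ${}^\kappa\kappa$.
   Context: For a cardinal $\nu$, ${}^\kappa\nu$ carries the topology with basic open sets $N_s=\{x\in{}^\kappa\nu : s\subseteq x\}$, $s$ a function from an ordinal below $\kappa$ to $\nu$. A subset of ${}^\kappa\kappa$ is $\mathbf{\Sigma}^1_1$ if it is the projection onto the first coordinate of a closed subset of ${}^\kappa\kappa\times{}^\kappa\kappa$. *)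

theory Defs
  imports "HOL-Analysis.Analysis"
begin

text \<open>The cardinal kappa is represented by a cardinal well-order k (on Field k);
ordinals below kappa are the elements of Field k, and the ordinal alpha is
identified with its set of predecessors underS k alpha.\<close>

definition gbaire_space :: "'a rel \<Rightarrow> 'b set \<Rightarrow> ('a \<Rightarrow> 'b) set" where
  "gbaire_space k V = (Field k \<rightarrow>\<^sub>E V)"

definition gbaire_basic :: "'a rel \<Rightarrow> 'b set \<Rightarrow> ('a \<Rightarrow> 'b) set set" where
  "gbaire_basic k V =
     {{x \<in> gbaire_space k V. \<forall>\<beta>\<in>underS k \<alpha>. x \<beta> = s \<beta>} | \<alpha> s.
        \<alpha> \<in> Field k \<and> s \<in> underS k \<alpha> \<rightarrow>\<^sub>E V}"

definition gbaire :: "'a rel \<Rightarrow> 'b set \<Rightarrow> ('a \<Rightarrow> 'b) topology" where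
  "gbaire k V = subtopology (topology_generated_by (gbaire_basic k V)) (gbaire_space k V)"

definition Sigma11 :: "'a rel \<Rightarrow> ('a \<Rightarrow> 'a) set \<Rightarrow> bool" where
  "Sigma11 k X \<longleftrightarrow>
     (\<exists>C. closedin (prod_topology (gbaire k (Field k)) (gbaire k (Field k))) C \<and> X = fst ` C)"

end

theory Submission
  imports Defs
begin

unbundle cardinal_syntax


definition agr :: "'a rel \<Rightarrow> 'a \<Rightarrow> ('a \<Rightarrow> 'b) \<Rightarrow> ('a \<Rightarrow> 'b) \<Rightarrow> bool" where
  "agr k \<beta> z z' \<longleftrightarrow> (\<forall>\<delta>\<in>underS k \<beta>. z \<delta> = z' \<delta>)"

locale gb =
  fixes k :: "'a rel"
  assumes card: "Card_order k" and inf: "\<not> finite (Field k)" and reg: "regularCard k"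
begin

lemma wo: "Well_order k" using card card_order_on_well_order_on by blast
lemma trans_k: "trans k" using wo by (simp add: order_on_defs)
lemma antisym_k: "antisym k" using wo by (simp add: order_on_defs)
lemma total_k: "a \<in> Field k \<Longrightarrow> b \<in> Field k \<Longrightarrow> (a,b) \<in> k \<or> (b,a) \<in> k"
  using wo unfolding order_on_defs total_on_def
  by (metis refl_onD)

lemma nomax: "\<beta> \<in> Field k \<Longrightarrow> \<exists>\<beta>'\<in>Field k. \<beta> \<in> underS k \<beta>'"
  using infinite_Card_order_limit[OF card inf] unfolding underS_def by fastforce

lemma maxl: "\<beta>1 \<in> Field k \<Longrightarrow> \<beta>2 \<in> Field k \<Longrightarrow>
   \<exists>\<beta>\<in>Field k. underS k \<beta>1 \<subseteq> underS k \<beta> \<and> underS k \<beta>2 \<subseteq> underS k \<beta>"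
  by (metis total_k underS_incr[OF trans_k antisym_k] subset_refl)

lemma bounded:
  assumes S: "S \<subseteq> Field k" and b: "\<beta> \<in> Field k" and le: "|S| \<le>o |underS k \<beta>|"
  shows "\<exists>\<beta>'\<in>Field k. S \<subseteq> underS k \<beta>'"
proof (rule ccontr)
  assume n: "\<not> ?thesis"
  have "cofinal S k" unfolding cofinal_def
  proof
    fix a assume a: "a \<in> Field k"
    obtain a' where a': "a' \<in> Field k" "a \<in> underS k a'" using nomax a by blast
    obtain s where s: "s \<in> S" "s \<notin> underS k a'" using n a' by blast
    have sF: "s \<in> Field k" using s S by blast
    have "(a', s) \<in> k"
    proof (cases "s = a'")
      case True thus ?thesis using a' wo unfolding order_on_defs refl_on_def by blast
    next
      case False thus ?thesis using total_k[OF a'(1) sF] s(2) unfolding underS_def by blast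
    qed
    hence "(a, s) \<in> k" "a \<noteq> s" using a' trans_k antisym_k unfolding underS_def trans_def antisym_def by blast+
    thus "\<exists>b\<in>S. a \<noteq> b \<and> (a, b) \<in> k" using s by blast
  qed
  hence "|S| =o k" using reg S unfolding regularCard_def by blast
  moreover have "|S| <o k" using le card_of_underS[OF card b] ordLeq_ordLess_trans by blast
  ultimately show False using not_ordLess_ordIso by blast
qed

lemma bounded_image:
  assumes "h ` underS k \<beta> \<subseteq> Field k" "\<beta> \<in> Field k"
  shows "\<exists>\<beta>'\<in>Field k. h ` underS k \<beta> \<subseteq> underS k \<beta>'"
  using bounded[OF assms(1,2)] card_of_image by blast

end


context gb begin

lemma uS: "underS k a \<subseteq> Field k" unfolding underS_def Field_def by blast

lemma Fne: "Field k \<noteq> {}" using inf by auto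

lemma agr_mono: "agr k \<beta> z z' \<Longrightarrow> underS k \<beta>' \<subseteq> underS k \<beta> \<Longrightarrow> agr k \<beta>' z z'"
  unfolding agr_def by blast

lemma agr_sym: "agr k \<beta> z z' \<longleftrightarrow> agr k \<beta> z' z"
  unfolding agr_def by metis

lemma agr_trans: "agr k \<beta> z z' \<Longrightarrow> agr k \<beta> z' z'' \<Longrightarrow> agr k \<beta> z z''"
  unfolding agr_def by metis

lemma basic_in: assumes a: "\<alpha> \<in> Field k" and z: "z \<in> gbaire_space k V"
  shows "{x \<in> gbaire_space k V. \<forall>\<beta>\<in>underS k \<alpha>. x \<beta> = restrict z (underS k \<alpha>) \<beta>} \<in> gbaire_basic k V"
proof -
  have "restrict z (underS k \<alpha>) \<in> underS k \<alpha> \<rightarrow>\<^sub>E V"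
    using z uS[of \<alpha>] unfolding gbaire_space_def by (auto simp: PiE_iff)
  thus ?thesis unfolding gbaire_basic_def using a by blast
qed

lemma topspace_gb: "topspace (gbaire k V) = gbaire_space k V"
proof -
  obtain \<alpha> where a: "\<alpha> \<in> Field k" using Fne by blast
  have "gbaire_space k V \<subseteq> \<Union>(gbaire_basic k V)"
  proof
    fix z assume z: "z \<in> gbaire_space k V"
    have "z \<in> {x \<in> gbaire_space k V. \<forall>\<beta>\<in>underS k \<alpha>. x \<beta> = restrict z (underS k \<alpha>) \<beta>}" using z by auto
    thus "z \<in> \<Union>(gbaire_basic k V)" using basic_in[OF a z] by blast
  qed
  moreover have "\<Union>(gbaire_basic k V) \<subseteq> gbaire_space k V" unfolding gbaire_basic_def by auto
  ultimately show ?thesis unfolding gbaire_def by auto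
qed

lemma open_iff: "openin (gbaire k V) U \<longleftrightarrow> U \<subseteq> gbaire_space k V \<and>
   (\<forall>z\<in>U. \<exists>\<beta>\<in>Field k. \<forall>z'\<in>gbaire_space k V. agr k \<beta> z z' \<longrightarrow> z' \<in> U)"
proof
  assume "openin (gbaire k V) U"
  then obtain T where T: "generate_topology_on (gbaire_basic k V) T" "U = T \<inter> gbaire_space k V"
    unfolding gbaire_def openin_subtopology openin_topology_generated_by_iff by blast
  have "\<forall>z\<in>T \<inter> gbaire_space k V. \<exists>\<beta>\<in>Field k. \<forall>z'\<in>gbaire_space k V. agr k \<beta> z z' \<longrightarrow> z' \<in> T"
    using T(1)
  proof (induction)
    case Empty thus ?case by simp
  next
    case (Int a b)
    show ?case
    proof
      fix z assume z: "z \<in> a \<inter> b \<inter> gbaire_space k V"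
      obtain \<beta>1 where b1: "\<beta>1\<in>Field k" "\<forall>z'\<in>gbaire_space k V. agr k \<beta>1 z z' \<longrightarrow> z' \<in> a" using Int.IH(1) z by blast
      obtain \<beta>2 where b2: "\<beta>2\<in>Field k" "\<forall>z'\<in>gbaire_space k V. agr k \<beta>2 z z' \<longrightarrow> z' \<in> b" using Int.IH(2) z by blast
      obtain \<beta> where b: "\<beta>\<in>Field k" "underS k \<beta>1 \<subseteq> underS k \<beta>" "underS k \<beta>2 \<subseteq> underS k \<beta>"
        using maxl[OF b1(1) b2(1)] by blast
      show "\<exists>\<beta>\<in>Field k. \<forall>z'\<in>gbaire_space k V. agr k \<beta> z z' \<longrightarrow> z' \<in> a \<inter> b"
        using b b1 b2 agr_mono by blast
    qed
  next
    case (UN K)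
    thus ?case by blast
  next
    case (Basis s)
    show ?case
    proof
      fix z assume z: "z \<in> s \<inter> gbaire_space k V"
      from Basis obtain \<alpha> t where s: "s = {x \<in> gbaire_space k V. \<forall>\<beta>\<in>underS k \<alpha>. x \<beta> = t \<beta>}" "\<alpha> \<in> Field k"
        unfolding gbaire_basic_def by blast
      show "\<exists>\<beta>\<in>Field k. \<forall>z'\<in>gbaire_space k V. agr k \<beta> z z' \<longrightarrow> z' \<in> s"
        using s z unfolding agr_def by (intro bexI[of _ \<alpha>]) auto
    qed
  qed
  thus "U \<subseteq> gbaire_space k V \<and> (\<forall>z\<in>U. \<exists>\<beta>\<in>Field k. \<forall>z'\<in>gbaire_space k V. agr k \<beta> z z' \<longrightarrow> z' \<in> U)"
    using T(2) by blast
next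
  assume A: "U \<subseteq> gbaire_space k V \<and> (\<forall>z\<in>U. \<exists>\<beta>\<in>Field k. \<forall>z'\<in>gbaire_space k V. agr k \<beta> z z' \<longrightarrow> z' \<in> U)"
  then obtain bf where bf: "\<forall>z\<in>U. bf z \<in> Field k \<and> (\<forall>z'\<in>gbaire_space k V. agr k (bf z) z z' \<longrightarrow> z' \<in> U)"
    by metis
  define N where "N z = {x \<in> gbaire_space k V. \<forall>\<beta>\<in>underS k (bf z). x \<beta> = restrict z (underS k (bf z)) \<beta>}" for z
  have NB: "z \<in> U \<Longrightarrow> N z \<in> gbaire_basic k V" for z
    unfolding N_def using basic_in bf A by blast
  have NU: "z \<in> U \<Longrightarrow> N z \<subseteq> U" for z
    unfolding N_def using bf by (auto simp: agr_def)
  have zN: "z \<in> U \<Longrightarrow> z \<in> N z" for z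
    unfolding N_def using A by auto
  have "U = (\<Union>z\<in>U. N z) \<inter> gbaire_space k V" using NU zN A by blast
  moreover have "generate_topology_on (gbaire_basic k V) (\<Union>z\<in>U. N z)"
    by (rule generate_topology_on.UN) (use NB generate_topology_on.Basis in blast)
  ultimately show "openin (gbaire k V) U"
    unfolding gbaire_def openin_subtopology openin_topology_generated_by_iff
    by (intro exI[of _ "\<Union>z\<in>U. N z"]) simp
qed

end


context gb begin

lemma nbhd_open: "z \<in> gbaire_space k V \<Longrightarrow> \<beta> \<in> Field k \<Longrightarrow>
   openin (gbaire k V) {z' \<in> gbaire_space k V. agr k \<beta> z z'}"
  unfolding open_iff
proof (intro conjI ballI)
  fix z'' assume "z'' \<in> {z' \<in> gbaire_space k V. agr k \<beta> z z'}" "\<beta> \<in> Field k"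
  thus "\<exists>\<beta>'\<in>Field k. \<forall>z'\<in>gbaire_space k V. agr k \<beta>' z'' z' \<longrightarrow> z' \<in> {z' \<in> gbaire_space k V. agr k \<beta> z z'}"
    using agr_trans[of \<beta> z z''] by blast
qed auto

lemma closed_iff: "closedin (gbaire k V) A \<longleftrightarrow> A \<subseteq> gbaire_space k V \<and>
   (\<forall>z\<in>gbaire_space k V. (\<forall>\<beta>\<in>Field k. \<exists>z'\<in>A. agr k \<beta> z z') \<longrightarrow> z \<in> A)"
proof
  assume cl: "closedin (gbaire k V) A"
  hence A: "A \<subseteq> gbaire_space k V" and o: "openin (gbaire k V) (gbaire_space k V - A)"
    by (simp_all add: closedin_def topspace_gb)
  have o': "\<forall>z\<in>gbaire_space k V - A.
           \<exists>\<beta>\<in>Field k. \<forall>z'\<in>gbaire_space k V. agr k \<beta> z z' \<longrightarrow> z' \<in> gbaire_space k V - A"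
    using o unfolding open_iff by blast
  show "A \<subseteq> gbaire_space k V \<and>
   (\<forall>z\<in>gbaire_space k V. (\<forall>\<beta>\<in>Field k. \<exists>z'\<in>A. agr k \<beta> z z') \<longrightarrow> z \<in> A)"
  proof (intro conjI A ballI impI)
    fix z assume z: "z \<in> gbaire_space k V" and c: "\<forall>\<beta>\<in>Field k. \<exists>z'\<in>A. agr k \<beta> z z'"
    show "z \<in> A"
    proof (rule ccontr)
      assume "z \<notin> A"
      then obtain \<beta> where b: "\<beta>\<in>Field k" "\<forall>z'\<in>gbaire_space k V. agr k \<beta> z z' \<longrightarrow> z' \<in> gbaire_space k V - A"
        using o' z by blast
      obtain z' where "z' \<in> A" "agr k \<beta> z z'" using c b(1) by blast
      thus False using b(2) A by blast
    qed
  qed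
next
  assume H: "A \<subseteq> gbaire_space k V \<and>
   (\<forall>z\<in>gbaire_space k V. (\<forall>\<beta>\<in>Field k. \<exists>z'\<in>A. agr k \<beta> z z') \<longrightarrow> z \<in> A)"
  have "openin (gbaire k V) (gbaire_space k V - A)"
    unfolding open_iff
  proof (intro conjI ballI)
    fix z assume z: "z \<in> gbaire_space k V - A"
    then obtain \<beta> where b: "\<beta>\<in>Field k" "\<not> (\<exists>z'\<in>A. agr k \<beta> z z')" using H by blast
    show "\<exists>\<beta>\<in>Field k. \<forall>z'\<in>gbaire_space k V. agr k \<beta> z z' \<longrightarrow> z' \<in> gbaire_space k V - A"
      using b by blast
  qed blast
  thus "closedin (gbaire k V) A" using H by (simp add: closedin_def topspace_gb)
qed

lemma closed_prod_intro:
  assumes sub: "C \<subseteq> gbaire_space k V \<times> gbaire_space k W"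
    and cl: "\<forall>y\<in>gbaire_space k V. \<forall>p\<in>gbaire_space k W.
        (\<forall>\<beta>\<in>Field k. \<exists>(y',p')\<in>C. agr k \<beta> y y' \<and> agr k \<beta> p p') \<longrightarrow> (y,p) \<in> C"
  shows "closedin (prod_topology (gbaire k V) (gbaire k W)) C"
  unfolding closedin_def topspace_prod_topology topspace_gb
proof (intro conjI sub)
  show "openin (prod_topology (gbaire k V) (gbaire k W)) (gbaire_space k V \<times> gbaire_space k W - C)"
    unfolding openin_prod_topology_alt
  proof (intro allI impI)
    fix y p assume yp: "(y, p) \<in> gbaire_space k V \<times> gbaire_space k W - C"
    have yin: "y \<in> gbaire_space k V" "p \<in> gbaire_space k W" "(y,p) \<notin> C" using yp by auto
    have "\<not> (\<forall>\<beta>\<in>Field k. \<exists>(y',p')\<in>C. agr k \<beta> y y' \<and> agr k \<beta> p p')"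
      using cl[rule_format, OF yin(1) yin(2)] yin(3) by blast
    then obtain \<beta> where b: "\<beta>\<in>Field k" "\<not> (\<exists>(y',p')\<in>C. agr k \<beta> y y' \<and> agr k \<beta> p p')"
      by blast
    let ?U = "{z' \<in> gbaire_space k V. agr k \<beta> y z'}"
    let ?V = "{z' \<in> gbaire_space k W. agr k \<beta> p z'}"
    have "openin (gbaire k V) ?U" "openin (gbaire k W) ?V" using nbhd_open yp b by auto
    moreover have "y \<in> ?U" "p \<in> ?V" using yp by (auto simp: agr_def)
    moreover have "?U \<times> ?V \<subseteq> gbaire_space k V \<times> gbaire_space k W - C" using b(2) by auto
    ultimately show "\<exists>U V'. openin (gbaire k V) U \<and> openin (gbaire k W) V' \<and> y \<in> U \<and> p \<in> V' \<and>
       U \<times> V' \<subseteq> gbaire_space k V \<times> gbaire_space k W - C" by (intro exI[of _ ?U] exI[of _ ?V]) simp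
  qed
qed

lemma closed_prod_D:
  assumes cl: "closedin (prod_topology (gbaire k V) (gbaire k W)) D"
    and y: "y\<in>gbaire_space k V" and p: "p\<in>gbaire_space k W"
    and ap: "\<forall>\<beta>\<in>Field k. \<exists>(y',p')\<in>D. agr k \<beta> y y' \<and> agr k \<beta> p p'"
  shows "(y,p) \<in> D"
proof (rule ccontr)
  assume n: "(y,p) \<notin> D"
  have o: "openin (prod_topology (gbaire k V) (gbaire k W)) (gbaire_space k V \<times> gbaire_space k W - D)"
    using cl unfolding closedin_def topspace_prod_topology topspace_gb by blast
  have H: "(y,p) \<in> gbaire_space k V \<times> gbaire_space k W - D" using n y p by simp
  obtain U V' where UV: "openin (gbaire k V) U" "openin (gbaire k W) V'" "y \<in> U" "p \<in> V'"
     "U \<times> V' \<subseteq> gbaire_space k V \<times> gbaire_space k W - D"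
    using o[unfolded openin_prod_topology_alt, rule_format, OF H] by blast
  have "\<forall>z\<in>U. \<exists>\<beta>\<in>Field k. \<forall>z'\<in>gbaire_space k V. agr k \<beta> z z' \<longrightarrow> z' \<in> U"
    using UV(1) unfolding open_iff by (rule conjunct2)
  then obtain \<beta>1 where b1: "\<beta>1\<in>Field k" "\<forall>z'\<in>gbaire_space k V. agr k \<beta>1 y z' \<longrightarrow> z' \<in> U"
    using UV(3) by blast
  have "\<forall>z\<in>V'. \<exists>\<beta>\<in>Field k. \<forall>z'\<in>gbaire_space k W. agr k \<beta> z z' \<longrightarrow> z' \<in> V'"
    using UV(2) unfolding open_iff by (rule conjunct2)
  then obtain \<beta>2 where b2: "\<beta>2\<in>Field k" "\<forall>z'\<in>gbaire_space k W. agr k \<beta>2 p z' \<longrightarrow> z' \<in> V'"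
    using UV(4) by blast
  obtain \<beta> where b: "\<beta>\<in>Field k" "underS k \<beta>1 \<subseteq> underS k \<beta>" "underS k \<beta>2 \<subseteq> underS k \<beta>"
    using maxl[OF b1(1) b2(1)] by blast
  obtain y' p' where yp': "(y',p') \<in> D" "agr k \<beta> y y'" "agr k \<beta> p p'" using ap b(1) by blast
  have "D \<subseteq> gbaire_space k V \<times> gbaire_space k W"
    using cl unfolding closedin_def topspace_prod_topology topspace_gb by blast
  hence in1: "y' \<in> gbaire_space k V" "p' \<in> gbaire_space k W" using yp'(1) by blast+
  have "agr k \<beta>1 y y'" by (rule agr_mono[OF yp'(2) b(2)])
  hence "y' \<in> U" using b1(2) in1 by blast
  have "agr k \<beta>2 p p'" by (rule agr_mono[OF yp'(3) b(3)])
  hence "p' \<in> V'" using b2(2) in1 by blast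
  note \<open>y' \<in> U\<close> this
  thus False using UV(5) yp'(1) by blast
qed

lemma cont_D:
  assumes c: "continuous_map (subtopology (gbaire k V) A) (gbaire k W) f"
    and A: "A \<subseteq> gbaire_space k V" and x: "x \<in> A" and g: "\<gamma> \<in> Field k"
  shows "\<exists>\<alpha>\<in>Field k. \<forall>x'\<in>A. agr k \<alpha> x x' \<longrightarrow> agr k \<gamma> (f x) (f x')"
proof -
  have fA: "f ` A \<subseteq> gbaire_space k W"
    using c A unfolding continuous_map_def topspace_subtopology topspace_gb by blast
  let ?U = "{z' \<in> gbaire_space k W. agr k \<gamma> (f x) z'}"
  have "openin (gbaire k W) ?U" using nbhd_open fA x g by blast
  hence "openin (subtopology (gbaire k V) A) {x' \<in> topspace (subtopology (gbaire k V) A). f x' \<in> ?U}"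
    using c unfolding continuous_map_def by blast
  then obtain T where T: "openin (gbaire k V) T" "{x' \<in> topspace (subtopology (gbaire k V) A). f x' \<in> ?U} = T \<inter> A"
    unfolding openin_subtopology by blast
  have ts: "topspace (subtopology (gbaire k V) A) = A" using A by (simp add: topspace_gb Int_absorb1)
  have "x \<in> T" using T(2) x fA unfolding ts by (auto simp: agr_def)
  moreover have "\<forall>z\<in>T. \<exists>\<beta>\<in>Field k. \<forall>z'\<in>gbaire_space k V. agr k \<beta> z z' \<longrightarrow> z' \<in> T"
    using T(1) unfolding open_iff by (rule conjunct2)
  ultimately obtain \<alpha> where a: "\<alpha>\<in>Field k" "\<forall>z'\<in>gbaire_space k V. agr k \<alpha> x z' \<longrightarrow> z' \<in> T"
    by blast
  show ?thesis
  proof (intro bexI[OF _ a(1)] ballI impI)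
    fix x' assume "x' \<in> A" "agr k \<alpha> x x'"
    hence "x' \<in> T \<inter> A" using a A by blast
    thus "agr k \<gamma> (f x) (f x')" using T(2) unfolding ts by blast
  qed
qed

end


context gb begin

lemma Field_Restr_sub: "Field (Restr r S) \<subseteq> S" by (auto simp: Field_def)

lemma pow_inj:
  assumes m: "m1 \<in> M" "m2 \<in> M" "m1 \<noteq> m2"
  shows "|Pow S| \<le>o |S \<rightarrow>\<^sub>E M|"
proof -
  define F where "F T = restrict (\<lambda>\<delta>. if \<delta> \<in> T then m1 else m2) S" for T
  have "inj_on F (Pow S)"
  proof (rule inj_onI)
    fix T T' assume T: "T \<in> Pow S" "T' \<in> Pow S" "F T = F T'"
    show "T = T'"
    proof (rule set_eqI)
      fix x
      show "x \<in> T \<longleftrightarrow> x \<in> T'"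
      proof (cases "x \<in> S")
        case True
        have "F T x = F T' x" using T(3) by simp
        thus ?thesis using True m(3) unfolding F_def by (auto split: if_splits)
      next
        case False thus ?thesis using T(1,2) by blast
      qed
    qed
  qed
  moreover have "F ` Pow S \<subseteq> S \<rightarrow>\<^sub>E M" unfolding F_def using m by auto
  ultimately show ?thesis using card_of_ordLeq by blast
qed

lemma K_le_M:
  assumes m: "m1 \<in> M" "m2 \<in> M" "m1 \<noteq> m2"
    and h: "\<forall>\<alpha>\<in>Field k. |underS k \<alpha> \<rightarrow>\<^sub>E M| \<le>o |M|"
  shows "|Field k| \<le>o |M|"
proof (rule ccontr)
  assume nle: "\<not> |Field k| \<le>o |M|"
  have "|M| <o |Field k|" using nle by (metis card_of_Well_order not_ordLeq_iff_ordLess)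
  hence "|M| <o k" by (rule ordLess_ordIso_trans[OF _ card_of_Field_ordIso[OF card]])
  hence "\<exists>a\<in>Field k. |M| =o Restr k (underS k a)"
    using ordLess_iff_ordIso_Restr[OF wo card_of_Well_order[of M]] by simp
  then obtain a where a: "a \<in> Field k" "|M| =o Restr k (underS k a)" by blast
  have "|Field |M|| \<le>o |Field (Restr k (underS k a))|" by (rule card_of_mono2[OF ordIso_imp_ordLeq[OF a(2)]])
  moreover have "|Field (Restr k (underS k a))| \<le>o |underS k a|" using card_of_mono1[OF Field_Restr_sub] .
  ultimately have 1: "|M| \<le>o |underS k a|" unfolding Field_card_of by (rule ordLeq_transitive)
  have "|Pow (underS k a)| \<le>o |underS k a|"
    by (rule ordLeq_transitive[OF ordLeq_transitive[OF pow_inj[OF m, of "underS k a"] h[rule_format, OF a(1)]] 1])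
  thus False using card_of_Pow[of "underS k a"] not_ordLess_ordLeq by blast
qed

lemma pairing: "\<exists>\<pi>. bij_betw \<pi> (Field k \<times> Field k) (Field k)"
  using card_of_Times_same_infinite[OF inf] card_of_ordIso by blast

lemma two_elems: "\<exists>a b. a \<in> Field k \<and> b \<in> Field k \<and> a \<noteq> b"
proof -
  obtain a where "a \<in> Field k" using Fne by blast
  moreover have "Field k - {a} \<noteq> {}" using inf by (metis finite.emptyI finite_insert insert_Diff_single insert_absorb2 Diff_empty)
  ultimately show ?thesis by blast
qed

lemma code_inj:
  assumes "|M| <o |Pow (Field k)|"
  shows "\<exists>c0. inj_on c0 M \<and> c0 ` M \<subseteq> gbaire_space k (Field k)"
proof -
  obtain a b where ab: "a \<in> Field k" "b \<in> Field k" "a \<noteq> b" using two_elems by blast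
  have "|Pow (Field k)| \<le>o |Field k \<rightarrow>\<^sub>E Field k|" using pow_inj[OF ab] .
  hence "|M| \<le>o |gbaire_space k (Field k)|" unfolding gbaire_space_def
    by (rule ordLeq_transitive[OF ordLess_imp_ordLeq[OF assms]])
  thus ?thesis using card_of_ordLeq[of M "gbaire_space k (Field k)"] by blast
qed

end


locale constr = gb k for k :: "'a rel" +
  fixes M :: "'b set" and \<pi> :: "'a \<times> 'a \<Rightarrow> 'a" and a0 a1 a2 a3 :: 'a and c0 :: "'b \<Rightarrow> 'a \<Rightarrow> 'a"
  assumes pi: "bij_betw \<pi> (Field k \<times> Field k) (Field k)"
    and aK: "a0 \<in> Field k" "a1 \<in> Field k" "a2 \<in> Field k" "a3 \<in> Field k"
    and adist: "a0 \<noteq> a1" "a0 \<noteq> a2" "a0 \<noteq> a3" "a1 \<noteq> a2" "a1 \<noteq> a3" "a2 \<noteq> a3"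
    and c0inj: "inj_on c0 M" and c0in: "c0 ` M \<subseteq> gbaire_space k (Field k)"
begin

definition "\<rho> = inv_into (Field k \<times> Field k) \<pi>"

lemma pi_in: "i \<in> Field k \<Longrightarrow> \<delta> \<in> Field k \<Longrightarrow> \<pi> (i,\<delta>) \<in> Field k"
  using pi unfolding bij_betw_def by auto

lemma rho_pi: "i \<in> Field k \<Longrightarrow> \<delta> \<in> Field k \<Longrightarrow> \<rho> (\<pi> (i,\<delta>)) = (i,\<delta>)"
  unfolding \<rho>_def using pi by (simp add: bij_betw_def inv_into_f_f)

lemma rho_in: "\<xi> \<in> Field k \<Longrightarrow> \<rho> \<xi> \<in> Field k \<times> Field k"
  unfolding \<rho>_def using pi by (metis bij_betw_def inv_into_into)

lemma pi_rho: "\<xi> \<in> Field k \<Longrightarrow> \<pi> (\<rho> \<xi>) = \<xi>"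
  unfolding \<rho>_def using pi by (metis bij_betw_def f_inv_into_f)

lemma rho_cases:
  assumes "\<xi> \<in> Field k"
  obtains i \<delta> where "i \<in> Field k" "\<delta> \<in> Field k" "\<xi> = \<pi> (i,\<delta>)" "\<rho> \<xi> = (i,\<delta>)"
  using rho_in[OF assms] pi_rho[OF assms] by (metis mem_Sigma_iff surj_pair)

definition "wc p \<gamma> \<epsilon> = p (\<pi> (\<pi> (a0, \<gamma>), \<epsilon>))"

definition "E \<alpha> y p = (\<lambda>\<xi>. if \<xi> \<in> Field k then (case \<rho> \<xi> of (i,\<delta>) \<Rightarrow>
   if i = a0 then \<alpha> else if i = a1 then (if \<delta> \<in> underS k \<alpha> then y \<delta> else a0)
   else if i = a2 then (case \<rho> \<delta> of (\<gamma>,\<epsilon>) \<Rightarrow> if \<gamma> \<in> underS k \<alpha> then wc p \<gamma> \<epsilon> else a0)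
   else a0) else undefined)"

definition "vs p \<alpha> = (\<lambda>\<epsilon>. if \<epsilon> \<in> Field k then p (\<pi> (\<pi> (a1, \<alpha>), \<epsilon>)) else undefined)"

definition "zt m = (\<lambda>\<xi>. if \<xi> \<in> Field k then (case \<rho> \<xi> of (i,\<delta>) \<Rightarrow>
   if i = a3 then a1 else if i = a0 then c0 m \<delta> else a0) else undefined)"

definition "Wenc x = (\<lambda>\<xi>. if \<xi> \<in> Field k then (case \<rho> \<xi> of (i,\<epsilon>) \<Rightarrow> case \<rho> i of (j,\<gamma>) \<Rightarrow>
   if j = a0 then c0 (x \<gamma>) \<epsilon> else a0) else undefined)"

definition "pw x v = (\<lambda>\<xi>. if \<xi> \<in> Field k then (case \<rho> \<xi> of (i,\<epsilon>) \<Rightarrow> case \<rho> i of (j,\<gamma>) \<Rightarrow>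
   if j = a0 then c0 (x \<gamma>) \<epsilon> else if j = a1 then v \<gamma> \<epsilon> else a0) else undefined)"

definition "h2 \<xi> = (case \<rho> \<xi> of (i,\<delta>) \<Rightarrow> case \<rho> \<delta> of (\<gamma>,\<epsilon>) \<Rightarrow> \<pi> (\<pi> (a0,\<gamma>), \<epsilon>))"

lemma E_a0: "\<delta> \<in> Field k \<Longrightarrow> E \<alpha> y p (\<pi> (a0,\<delta>)) = \<alpha>"
  unfolding E_def using aK by (simp add: pi_in rho_pi)

lemma E_a1: "\<delta> \<in> Field k \<Longrightarrow> E \<alpha> y p (\<pi> (a1,\<delta>)) = (if \<delta> \<in> underS k \<alpha> then y \<delta> else a0)"
  unfolding E_def using aK adist by (simp add: pi_in rho_pi)

lemma E_a2: "\<gamma> \<in> Field k \<Longrightarrow> \<epsilon> \<in> Field k \<Longrightarrow>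
   E \<alpha> y p (\<pi> (a2,\<pi> (\<gamma>,\<epsilon>))) = (if \<gamma> \<in> underS k \<alpha> then wc p \<gamma> \<epsilon> else a0)"
  unfolding E_def using aK adist by (simp add: pi_in rho_pi)

lemma E_a3: "\<delta> \<in> Field k \<Longrightarrow> E \<alpha> y p (\<pi> (a3,\<delta>)) = a0"
  unfolding E_def using aK adist by (simp add: pi_in rho_pi)

lemma zt_a3: "\<delta> \<in> Field k \<Longrightarrow> zt m (\<pi> (a3,\<delta>)) = a1"
  unfolding zt_def using aK adist by (simp add: pi_in rho_pi)

lemma zt_a0: "\<delta> \<in> Field k \<Longrightarrow> zt m (\<pi> (a0,\<delta>)) = c0 m \<delta>"
  unfolding zt_def using aK adist by (simp add: pi_in rho_pi)

lemma wc_Wenc: "\<gamma> \<in> Field k \<Longrightarrow> \<epsilon> \<in> Field k \<Longrightarrow> wc (Wenc x) \<gamma> \<epsilon> = c0 (x \<gamma>) \<epsilon>"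
  unfolding wc_def Wenc_def using aK by (simp add: pi_in rho_pi)

lemma wc_pw: "\<gamma> \<in> Field k \<Longrightarrow> \<epsilon> \<in> Field k \<Longrightarrow> wc (pw x v) \<gamma> \<epsilon> = c0 (x \<gamma>) \<epsilon>"
  unfolding wc_def pw_def using aK by (simp add: pi_in rho_pi)

lemma vs_pw: "\<alpha> \<in> Field k \<Longrightarrow> v \<alpha> \<in> gbaire_space k (Field k) \<Longrightarrow> vs (pw x v) \<alpha> = v \<alpha>"
  unfolding vs_def pw_def gbaire_space_def using aK adist
  by (auto simp: pi_in rho_pi PiE_iff extensional_def fun_eq_iff)

lemma gsD: "p \<in> gbaire_space k V \<Longrightarrow> \<xi> \<in> Field k \<Longrightarrow> p \<xi> \<in> V"
  unfolding gbaire_space_def by auto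

lemma gsI: "(\<And>\<xi>. \<xi> \<in> Field k \<Longrightarrow> p \<xi> \<in> V) \<Longrightarrow> (\<And>\<xi>. \<xi> \<notin> Field k \<Longrightarrow> p \<xi> = undefined) \<Longrightarrow>
   p \<in> gbaire_space k V"
  unfolding gbaire_space_def by auto

lemma E_in: assumes "\<alpha> \<in> Field k" "y \<in> gbaire_space k (Field k)" "p \<in> gbaire_space k (Field k)"
  shows "E \<alpha> y p \<in> gbaire_space k (Field k)"
proof (rule gsI)
  fix \<xi> assume x: "\<xi> \<in> Field k"
  then obtain i \<delta> where id: "i \<in> Field k" "\<delta> \<in> Field k" "\<xi> = \<pi> (i,\<delta>)" by (rule rho_cases)
  then obtain \<gamma> \<epsilon> where ge: "\<gamma> \<in> Field k" "\<epsilon> \<in> Field k" "\<delta> = \<pi> (\<gamma>,\<epsilon>)" by (metis rho_cases)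
  have w: "wc p \<gamma> \<epsilon> \<in> Field k" unfolding wc_def using assms(3) ge aK by (simp add: gsD pi_in)
  show "E \<alpha> y p \<xi> \<in> Field k"
    unfolding E_def id(3) ge(3) using id ge assms aK w gsD[OF assms(2)] by (auto simp: rho_pi pi_in)
qed (simp add: E_def)

lemma vs_in: assumes "\<alpha> \<in> Field k" "p \<in> gbaire_space k (Field k)"
  shows "vs p \<alpha> \<in> gbaire_space k (Field k)"
  by (rule gsI) (use assms aK in \<open>auto simp: vs_def pi_in gsD\<close>)

lemma zt_in: assumes "m \<in> M" shows "zt m \<in> gbaire_space k (Field k)"
proof (rule gsI)
  fix \<xi> assume x: "\<xi> \<in> Field k"
  then obtain i \<delta> where id: "i \<in> Field k" "\<delta> \<in> Field k" "\<xi> = \<pi> (i,\<delta>)" by (rule rho_cases)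
  have "c0 m \<in> gbaire_space k (Field k)" using c0in assms by blast
  thus "zt m \<xi> \<in> Field k" unfolding zt_def id(3) using id aK by (auto simp: rho_pi pi_in gsD)
qed (simp add: zt_def)

lemma Wenc_in: assumes "x \<in> gbaire_space k M" shows "Wenc x \<in> gbaire_space k (Field k)"
proof (rule gsI)
  fix \<xi> assume x: "\<xi> \<in> Field k"
  then obtain i \<epsilon> where id: "i \<in> Field k" "\<epsilon> \<in> Field k" "\<xi> = \<pi> (i,\<epsilon>)" by (rule rho_cases)
  then obtain j \<gamma> where ge: "j \<in> Field k" "\<gamma> \<in> Field k" "i = \<pi> (j,\<gamma>)" by (metis rho_cases)
  have "c0 (x \<gamma>) \<in> gbaire_space k (Field k)" using c0in gsD[OF assms ge(2)] by blast
  thus "Wenc x \<xi> \<in> Field k" unfolding Wenc_def id(3) ge(3) using id ge aK by (auto simp: rho_pi pi_in gsD)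
qed (simp add: Wenc_def)

lemma pw_in: assumes "x \<in> gbaire_space k M" "\<forall>\<alpha>\<in>Field k. v \<alpha> \<in> gbaire_space k (Field k)"
  shows "pw x v \<in> gbaire_space k (Field k)"
proof (rule gsI)
  fix \<xi> assume x: "\<xi> \<in> Field k"
  then obtain i \<epsilon> where id: "i \<in> Field k" "\<epsilon> \<in> Field k" "\<xi> = \<pi> (i,\<epsilon>)" by (rule rho_cases)
  then obtain j \<gamma> where ge: "j \<in> Field k" "\<gamma> \<in> Field k" "i = \<pi> (j,\<gamma>)" by (metis rho_cases)
  have "c0 (x \<gamma>) \<in> gbaire_space k (Field k)" using c0in gsD[OF assms(1) ge(2)] by blast
  moreover have "v \<gamma> \<in> gbaire_space k (Field k)" using assms(2) ge(2) by blast
  ultimately show "pw x v \<xi> \<in> Field k" unfolding pw_def id(3) ge(3) using id ge aK by (auto simp: rho_pi pi_in gsD)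
qed (simp add: pw_def)

lemma zt_inj: "inj_on zt M"
proof (rule inj_onI)
  fix m m' assume m: "m \<in> M" "m' \<in> M" "zt m = zt m'"
  have "c0 m = c0 m'"
  proof
    fix \<delta> show "c0 m \<delta> = c0 m' \<delta>"
    proof (cases "\<delta> \<in> Field k")
      case True thus ?thesis using m(3) zt_a0[OF True] by metis
    next
      case False
      have "c0 m \<in> Field k \<rightarrow>\<^sub>E Field k" "c0 m' \<in> Field k \<rightarrow>\<^sub>E Field k"
        using c0in m(1,2) unfolding gbaire_space_def by blast+
      thus ?thesis using PiE_arb[OF _ False] by metis
    qed
  qed
  thus "m = m'" by (rule inj_onD[OF c0inj _ m(1,2)])
qed

lemma E_ne_zt: "E \<alpha> y p \<noteq> zt m"
  using E_a3[OF aK(1)] zt_a3[OF aK(1)] adist(1) by metis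

lemma E_cong: assumes "\<forall>\<delta>\<in>underS k \<alpha>. y \<delta> = y' \<delta>" "\<forall>\<gamma>\<in>underS k \<alpha>. \<forall>\<epsilon>\<in>Field k. wc p \<gamma> \<epsilon> = wc p' \<gamma> \<epsilon>"
  shows "E \<alpha> y p = E \<alpha> y' p'"
proof
  fix \<xi> show "E \<alpha> y p \<xi> = E \<alpha> y' p' \<xi>"
  proof (cases "\<xi> \<in> Field k")
    case x: True
    then obtain i \<delta> where id: "i \<in> Field k" "\<delta> \<in> Field k" "\<xi> = \<pi> (i,\<delta>)" by (rule rho_cases)
    then obtain \<gamma> \<epsilon> where ge: "\<gamma> \<in> Field k" "\<epsilon> \<in> Field k" "\<delta> = \<pi> (\<gamma>,\<epsilon>)" by (metis rho_cases)
    have 1: "\<delta> \<in> underS k \<alpha> \<Longrightarrow> y \<delta> = y' \<delta>" using assms(1) by blast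
    have 2: "\<gamma> \<in> underS k \<alpha> \<Longrightarrow> wc p \<gamma> \<epsilon> = wc p' \<gamma> \<epsilon>" using assms(2) ge(2) by blast
    have r: "\<rho> \<xi> = (i,\<delta>)" "\<rho> \<delta> = (\<gamma>,\<epsilon>)" using id ge by (simp_all add: rho_pi)
    show ?thesis unfolding E_def using x r aK 1 2 by simp
  qed (simp add: E_def)
qed

lemma h2_in: "\<xi> \<in> Field k \<Longrightarrow> h2 \<xi> \<in> Field k"
proof -
  assume x: "\<xi> \<in> Field k"
  then obtain i \<delta> where id: "i \<in> Field k" "\<delta> \<in> Field k" "\<xi> = \<pi> (i,\<delta>)" by (rule rho_cases)
  then obtain \<gamma> \<epsilon> where ge: "\<gamma> \<in> Field k" "\<epsilon> \<in> Field k" "\<delta> = \<pi> (\<gamma>,\<epsilon>)" by (metis rho_cases)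
  show ?thesis unfolding h2_def id(3) ge(3) using id ge aK by (simp add: rho_pi pi_in)
qed

lemma E_agree_pt: assumes "\<xi> \<in> Field k" "\<forall>\<delta>\<in>underS k \<alpha>. y \<delta> = y' \<delta>" "p (h2 \<xi>) = p' (h2 \<xi>)"
  shows "E \<alpha> y p \<xi> = E \<alpha> y' p' \<xi>"
proof -
  obtain i \<delta> where id: "i \<in> Field k" "\<delta> \<in> Field k" "\<xi> = \<pi> (i,\<delta>)" using assms(1) by (rule rho_cases)
  then obtain \<gamma> \<epsilon> where ge: "\<gamma> \<in> Field k" "\<epsilon> \<in> Field k" "\<delta> = \<pi> (\<gamma>,\<epsilon>)" by (metis rho_cases)
  have "p (\<pi> (\<pi> (a0,\<gamma>), \<epsilon>)) = p' (\<pi> (\<pi> (a0,\<gamma>), \<epsilon>))"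
    using assms(3) unfolding h2_def id(3) ge(3) using id ge by (simp add: rho_pi pi_in)
  moreover have "\<delta> \<in> underS k \<alpha> \<Longrightarrow> y \<delta> = y' \<delta>" using assms(2) by blast
  moreover have r: "\<rho> \<xi> = (i,\<delta>)" "\<rho> \<delta> = (\<gamma>,\<epsilon>)" using id ge by (simp_all add: rho_pi)
  ultimately show ?thesis unfolding E_def wc_def using assms(1) r aK by simp
qed

end


context constr begin

lemma main_constr:
  assumes Acl: "closedin (gbaire k M) A"
    and fc: "continuous_map (subtopology (gbaire k M) A) (gbaire k (Field k)) f"
    and Dcl: "closedin (prod_topology (gbaire k (Field k)) (gbaire k (Field k))) D"
    and Dfst: "fst ` D = {E \<alpha> (f x) (Wenc x) | \<alpha> x. \<alpha> \<in> Field k \<and> x \<in> A} \<union> zt ` M"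
  shows "Sigma11 k (f ` A)"
proof -
  let ?B = "gbaire_space k (Field k)"
  define C where "C = {(y,p). y \<in> ?B \<and> p \<in> ?B \<and> (\<forall>\<alpha>\<in>Field k. (E \<alpha> y p, vs p \<alpha>) \<in> D)}"
  have AB: "A \<subseteq> gbaire_space k M" using Acl closed_iff by blast
  have fA: "f ` A \<subseteq> ?B"
    using fc AB unfolding continuous_map_def topspace_subtopology topspace_gb by blast
  have DB: "D \<subseteq> ?B \<times> ?B"
    using Dcl unfolding closedin_def topspace_prod_topology topspace_gb by blast
  have Ccl: "closedin (prod_topology (gbaire k (Field k)) (gbaire k (Field k))) C"
  proof (rule closed_prod_intro)
    show "C \<subseteq> ?B \<times> ?B" unfolding C_def by blast
  next
    show "\<forall>y\<in>?B. \<forall>p\<in>?B. (\<forall>\<beta>\<in>Field k. \<exists>(y',p')\<in>C. agr k \<beta> y y' \<and> agr k \<beta> p p') \<longrightarrow> (y,p) \<in> C"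
    proof (intro ballI impI)
      fix y p assume y: "y \<in> ?B" and p: "p \<in> ?B"
        and H: "\<forall>\<beta>\<in>Field k. \<exists>(y',p')\<in>C. agr k \<beta> y y' \<and> agr k \<beta> p p'"
      have "\<forall>\<alpha>\<in>Field k. (E \<alpha> y p, vs p \<alpha>) \<in> D"
      proof
        fix \<alpha> assume a: "\<alpha> \<in> Field k"
        show "(E \<alpha> y p, vs p \<alpha>) \<in> D"
        proof (rule closed_prod_D[OF Dcl E_in[OF a y p] vs_in[OF a p]], rule ballI)
          fix \<beta> assume b: "\<beta> \<in> Field k"
          let ?h3 = "\<lambda>\<xi>. \<pi> (\<pi> (a1,\<alpha>), \<xi>)"
          have "h2 ` underS k \<beta> \<subseteq> Field k" using h2_in uS by blast
          then obtain \<beta>2 where b2: "\<beta>2 \<in> Field k" "h2 ` underS k \<beta> \<subseteq> underS k \<beta>2"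
            using bounded_image b by blast
          have "?h3 ` underS k \<beta> \<subseteq> Field k" using uS aK a pi_in by blast
          then obtain \<beta>3 where b3: "\<beta>3 \<in> Field k" "?h3 ` underS k \<beta> \<subseteq> underS k \<beta>3"
            using bounded_image b by blast
          obtain \<beta>4 where b4: "\<beta>4 \<in> Field k" "underS k \<alpha> \<subseteq> underS k \<beta>4" "underS k \<beta>2 \<subseteq> underS k \<beta>4"
            using maxl[OF a b2(1)] by blast
          obtain \<beta>' where b': "\<beta>' \<in> Field k" "underS k \<beta>4 \<subseteq> underS k \<beta>'" "underS k \<beta>3 \<subseteq> underS k \<beta>'"
            using maxl[OF b4(1) b3(1)] by blast
          obtain y' p' where yp': "(y',p') \<in> C" "agr k \<beta>' y y'" "agr k \<beta>' p p'"
            using H b'(1) by blast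
          have D': "(E \<alpha> y' p', vs p' \<alpha>) \<in> D" using yp'(1) a unfolding C_def by blast
          have ya: "\<forall>\<delta>\<in>underS k \<alpha>. y \<delta> = y' \<delta>"
            using yp'(2) b4(2) b'(2) unfolding agr_def by blast
          have 1: "agr k \<beta> (E \<alpha> y p) (E \<alpha> y' p')"
            unfolding agr_def
          proof
            fix \<xi> assume x: "\<xi> \<in> underS k \<beta>"
            have "h2 \<xi> \<in> underS k \<beta>'" using x b2(2) b4(3) b'(2) by blast
            hence "p (h2 \<xi>) = p' (h2 \<xi>)" using yp'(3) unfolding agr_def by blast
            thus "E \<alpha> y p \<xi> = E \<alpha> y' p' \<xi>" using E_agree_pt[OF _ ya] x uS by blast
          qed
          have 2: "agr k \<beta> (vs p \<alpha>) (vs p' \<alpha>)"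
            unfolding agr_def
          proof
            fix \<xi> assume x: "\<xi> \<in> underS k \<beta>"
            have "?h3 \<xi> \<in> underS k \<beta>'" using x b3(2) b'(3) by blast
            hence "p (?h3 \<xi>) = p' (?h3 \<xi>)" using yp'(3) unfolding agr_def by blast
            thus "vs p \<alpha> \<xi> = vs p' \<alpha> \<xi>" unfolding vs_def using x uS by auto
          qed
          show "\<exists>(u',v')\<in>D. agr k \<beta> (E \<alpha> y p) u' \<and> agr k \<beta> (vs p \<alpha>) v'"
            using D' 1 2 by blast
        qed
      qed
      thus "(y,p) \<in> C" unfolding C_def using y p by blast
    qed
  qed
  have "fst ` C = f ` A"
  proof
    show "f ` A \<subseteq> fst ` C"
    proof
      fix y assume "y \<in> f ` A"
      then obtain x where x: "x \<in> A" "y = f x" by blast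
      have "\<forall>\<alpha>\<in>Field k. \<exists>v. (E \<alpha> (f x) (Wenc x), v) \<in> D"
      proof
        fix \<alpha> assume "\<alpha> \<in> Field k"
        hence "E \<alpha> (f x) (Wenc x) \<in> fst ` D" unfolding Dfst using x(1) by blast
        thus "\<exists>v. (E \<alpha> (f x) (Wenc x), v) \<in> D" by force
      qed
      then obtain v where v: "\<forall>\<alpha>\<in>Field k. (E \<alpha> (f x) (Wenc x), v \<alpha>) \<in> D" by metis
      have vB: "\<forall>\<alpha>\<in>Field k. v \<alpha> \<in> ?B" using v DB by blast
      have xB: "x \<in> gbaire_space k M" using x AB by blast
      have "\<forall>\<alpha>\<in>Field k. (E \<alpha> y (pw x v), vs (pw x v) \<alpha>) \<in> D"
      proof
        fix \<alpha> assume a: "\<alpha> \<in> Field k"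
        have c1: "\<forall>\<delta>\<in>underS k \<alpha>. y \<delta> = f x \<delta>" using x(2) by simp
        have c2: "\<forall>\<gamma>\<in>underS k \<alpha>. \<forall>\<epsilon>\<in>Field k. wc (pw x v) \<gamma> \<epsilon> = wc (Wenc x) \<gamma> \<epsilon>"
        proof (intro ballI)
          fix \<gamma> \<epsilon> assume g: "\<gamma> \<in> underS k \<alpha>" and e: "\<epsilon> \<in> Field k"
          have "\<gamma> \<in> Field k" using g uS by blast
          thus "wc (pw x v) \<gamma> \<epsilon> = wc (Wenc x) \<gamma> \<epsilon>" using e by (simp add: wc_pw wc_Wenc)
        qed
        have "E \<alpha> y (pw x v) = E \<alpha> (f x) (Wenc x)" by (rule E_cong[OF c1 c2])
        moreover have "vs (pw x v) \<alpha> = v \<alpha>" using vs_pw a vB by blast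
        ultimately show "(E \<alpha> y (pw x v), vs (pw x v) \<alpha>) \<in> D" using v a by simp
      qed
      moreover have "y \<in> ?B" using fA x by blast
      moreover have "pw x v \<in> ?B" using pw_in xB vB by blast
      ultimately have "(y, pw x v) \<in> C" unfolding C_def by blast
      thus "y \<in> fst ` C" by force
    qed
  next
    show "fst ` C \<subseteq> f ` A"
    proof
      fix y assume "y \<in> fst ` C"
      then obtain p where yp: "(y,p) \<in> C" by force
      have yB: "y \<in> ?B" and pB: "p \<in> ?B" using yp unfolding C_def by blast+
      have "\<forall>\<alpha>\<in>Field k. \<exists>x. x \<in> A \<and> (\<forall>\<delta>\<in>underS k \<alpha>. y \<delta> = f x \<delta>) \<and>
               (\<forall>\<gamma>\<in>underS k \<alpha>. \<forall>\<epsilon>\<in>Field k. wc p \<gamma> \<epsilon> = c0 (x \<gamma>) \<epsilon>)"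
      proof
        fix \<alpha> assume a: "\<alpha> \<in> Field k"
        have "(E \<alpha> y p, vs p \<alpha>) \<in> D" using yp a unfolding C_def by blast
        hence "E \<alpha> y p \<in> fst ` D" by force
        moreover have "E \<alpha> y p \<notin> zt ` M" using E_ne_zt by blast
        ultimately obtain \<alpha>' x where ax: "\<alpha>' \<in> Field k" "x \<in> A" "E \<alpha> y p = E \<alpha>' (f x) (Wenc x)"
          unfolding Dfst by blast
        have "\<alpha> = \<alpha>'" using E_a0[OF aK(1), of \<alpha> y p] E_a0[OF aK(1), of \<alpha>' "f x" "Wenc x"] ax(3) by simp
        hence e: "E \<alpha> y p = E \<alpha> (f x) (Wenc x)" using ax(3) by simp
        have 1: "\<forall>\<delta>\<in>underS k \<alpha>. y \<delta> = f x \<delta>"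
        proof
          fix \<delta> assume d: "\<delta> \<in> underS k \<alpha>"
          hence dK: "\<delta> \<in> Field k" using uS by blast
          show "y \<delta> = f x \<delta>" using E_a1[OF dK, of \<alpha> y p] E_a1[OF dK, of \<alpha> "f x" "Wenc x"] e d by simp
        qed
        have 2: "\<forall>\<gamma>\<in>underS k \<alpha>. \<forall>\<epsilon>\<in>Field k. wc p \<gamma> \<epsilon> = c0 (x \<gamma>) \<epsilon>"
        proof (intro ballI)
          fix \<gamma> \<epsilon> assume g: "\<gamma> \<in> underS k \<alpha>" and ep: "\<epsilon> \<in> Field k"
          hence gK: "\<gamma> \<in> Field k" using uS by blast
          show "wc p \<gamma> \<epsilon> = c0 (x \<gamma>) \<epsilon>"
            using E_a2[OF gK ep, of \<alpha> y p] E_a2[OF gK ep, of \<alpha> "f x" "Wenc x"] e g wc_Wenc[OF gK ep] by simp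
        qed
        show "\<exists>x. x \<in> A \<and> (\<forall>\<delta>\<in>underS k \<alpha>. y \<delta> = f x \<delta>) \<and>
               (\<forall>\<gamma>\<in>underS k \<alpha>. \<forall>\<epsilon>\<in>Field k. wc p \<gamma> \<epsilon> = c0 (x \<gamma>) \<epsilon>)"
          using ax(2) 1 2 by blast
      qed
      then obtain xs where xs: "\<forall>\<alpha>\<in>Field k. xs \<alpha> \<in> A \<and> (\<forall>\<delta>\<in>underS k \<alpha>. y \<delta> = f (xs \<alpha>) \<delta>) \<and>
               (\<forall>\<gamma>\<in>underS k \<alpha>. \<forall>\<epsilon>\<in>Field k. wc p \<gamma> \<epsilon> = c0 (xs \<alpha> \<gamma>) \<epsilon>)"
        by metis
      have consist: "xs \<alpha>1 \<gamma> = xs \<alpha>2 \<gamma>"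
        if a: "\<alpha>1 \<in> Field k" "\<alpha>2 \<in> Field k" "\<gamma> \<in> underS k \<alpha>1" "\<gamma> \<in> underS k \<alpha>2" for \<alpha>1 \<alpha>2 \<gamma>
      proof -
        have gK: "\<gamma> \<in> Field k" using a uS by blast
        have m1: "xs \<alpha>1 \<gamma> \<in> M" using xs a(1) AB gsD gK by blast
        have m2: "xs \<alpha>2 \<gamma> \<in> M" using xs a(2) AB gsD gK by blast
        have c1: "c0 (xs \<alpha>1 \<gamma>) \<in> ?B" "c0 (xs \<alpha>2 \<gamma>) \<in> ?B" using c0in m1 m2 by blast+
        have "c0 (xs \<alpha>1 \<gamma>) = c0 (xs \<alpha>2 \<gamma>)"
        proof
          fix \<epsilon> show "c0 (xs \<alpha>1 \<gamma>) \<epsilon> = c0 (xs \<alpha>2 \<gamma>) \<epsilon>"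
          proof (cases "\<epsilon> \<in> Field k")
            case True
            have "wc p \<gamma> \<epsilon> = c0 (xs \<alpha>1 \<gamma>) \<epsilon>" using xs a(1,3) True by blast
            moreover have "wc p \<gamma> \<epsilon> = c0 (xs \<alpha>2 \<gamma>) \<epsilon>" using xs a(2,4) True by blast
            ultimately show ?thesis by simp
          next
            case False
            thus ?thesis using c1 unfolding gbaire_space_def by (metis PiE_arb)
          qed
        qed
        thus ?thesis by (rule inj_onD[OF c0inj _ m1 m2])
      qed
      obtain s where s: "\<forall>\<gamma>\<in>Field k. s \<gamma> \<in> Field k \<and> \<gamma> \<in> underS k (s \<gamma>)"
        using nomax by metis
      define x0 where "x0 = (\<lambda>\<gamma>. if \<gamma> \<in> Field k then xs (s \<gamma>) \<gamma> else undefined)"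
      have agr0: "agr k \<alpha> x0 (xs \<alpha>)" if a: "\<alpha> \<in> Field k" for \<alpha>
        unfolding agr_def
      proof
        fix \<delta> assume d: "\<delta> \<in> underS k \<alpha>"
        hence dK: "\<delta> \<in> Field k" using uS by blast
        show "x0 \<delta> = xs \<alpha> \<delta>" unfolding x0_def using dK consist[OF _ a _ d] s by simp
      qed
      have x0B: "x0 \<in> gbaire_space k M"
      proof (rule gsI)
        fix \<gamma> assume g: "\<gamma> \<in> Field k"
        hence "xs (s \<gamma>) \<in> gbaire_space k M" using xs s AB by blast
        thus "x0 \<gamma> \<in> M" unfolding x0_def using g gsD by simp
      qed (simp add: x0_def)
      have x0A: "x0 \<in> A"
        using Acl unfolding closed_iff
      proof (elim conjE)
        assume "\<forall>z\<in>gbaire_space k M. (\<forall>\<beta>\<in>Field k. \<exists>z'\<in>A. agr k \<beta> z z') \<longrightarrow> z \<in> A"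
        moreover have "\<forall>\<beta>\<in>Field k. \<exists>z'\<in>A. agr k \<beta> x0 z'" using agr0 xs by blast
        ultimately show "x0 \<in> A" using x0B by blast
      qed
      have "y = f x0"
      proof
        fix \<gamma> show "y \<gamma> = f x0 \<gamma>"
        proof (cases "\<gamma> \<in> Field k")
          case False
          have "f x0 \<in> ?B" using fA x0A by blast
          thus ?thesis using yB False unfolding gbaire_space_def by (metis PiE_arb)
        next
          case g: True
          have sg: "s \<gamma> \<in> Field k" "\<gamma> \<in> underS k (s \<gamma>)" using s g by blast+
          obtain \<alpha> where a: "\<alpha> \<in> Field k" "\<forall>x'\<in>A. agr k \<alpha> x0 x' \<longrightarrow> agr k (s \<gamma>) (f x0) (f x')"
            using cont_D[OF fc AB x0A sg(1)] by blast
          obtain \<alpha>'' where a'': "\<alpha>'' \<in> Field k" "underS k \<alpha> \<subseteq> underS k \<alpha>''" "underS k (s \<gamma>) \<subseteq> underS k \<alpha>''"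
            using maxl[OF a(1) sg(1)] by blast
          have "agr k \<alpha> x0 (xs \<alpha>'')" using agr_mono[OF agr0[OF a''(1)] a''(2)] .
          hence "agr k (s \<gamma>) (f x0) (f (xs \<alpha>''))" using a(2) xs a''(1) by blast
          hence 1: "f x0 \<gamma> = f (xs \<alpha>'') \<gamma>" using sg(2) unfolding agr_def by blast
          have "\<gamma> \<in> underS k \<alpha>''" using sg(2) a''(3) by blast
          hence "y \<gamma> = f (xs \<alpha>'') \<gamma>" using xs a''(1) by blast
          thus ?thesis using 1 by simp
        qed
      qed
      thus "y \<in> f ` A" using x0A by blast
    qed
  qed
  thus ?thesis unfolding Sigma11_def using Ccl by blast
qed

end


context constr begin

lemma count_X:
  assumes Minf: "infinite M" and KM: "|Field k| \<le>o |M|"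
    and h: "\<forall>\<alpha>\<in>Field k. |underS k \<alpha> \<rightarrow>\<^sub>E M| \<le>o |M|"
    and AB: "A \<subseteq> gbaire_space k M" and fA: "f ` A \<subseteq> gbaire_space k (Field k)"
  shows "|{E \<alpha> (f x) (Wenc x) | \<alpha> x. \<alpha> \<in> Field k \<and> x \<in> A} \<union> zt ` M| =o |M|"
proof -
  let ?X = "{E \<alpha> (f x) (Wenc x) | \<alpha> x. \<alpha> \<in> Field k \<and> x \<in> A}"
  let ?S = "SIGMA \<alpha>:Field k. underS k \<alpha> \<rightarrow>\<^sub>E (Field k \<times> M)"
  define F where "F = (\<lambda>(\<alpha>,t). E \<alpha> (\<lambda>\<delta>. fst (t \<delta>)) (Wenc (\<lambda>\<gamma>. snd (t \<gamma>))))"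
  have XS: "?X \<subseteq> F ` ?S"
  proof
    fix z assume "z \<in> ?X"
    then obtain \<alpha> x where ax: "\<alpha> \<in> Field k" "x \<in> A" "z = E \<alpha> (f x) (Wenc x)" by blast
    define t where "t = restrict (\<lambda>\<delta>. (f x \<delta>, x \<delta>)) (underS k \<alpha>)"
    have xB: "x \<in> gbaire_space k M" using ax AB by blast
    have fxB: "f x \<in> gbaire_space k (Field k)" using ax fA by blast
    have tS: "(\<alpha>,t) \<in> ?S" unfolding t_def using ax(1) gsD[OF xB] gsD[OF fxB] uS by auto
    have c1: "\<forall>\<delta>\<in>underS k \<alpha>. fst (t \<delta>) = f x \<delta>" unfolding t_def by simp
    have c2: "\<forall>\<gamma>\<in>underS k \<alpha>. \<forall>\<epsilon>\<in>Field k. wc (Wenc (\<lambda>\<gamma>. snd (t \<gamma>))) \<gamma> \<epsilon> = wc (Wenc x) \<gamma> \<epsilon>"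
    proof (intro ballI)
      fix \<gamma> \<epsilon> assume g: "\<gamma> \<in> underS k \<alpha>" and e: "\<epsilon> \<in> Field k"
      have "\<gamma> \<in> Field k" using g uS by blast
      thus "wc (Wenc (\<lambda>\<gamma>. snd (t \<gamma>))) \<gamma> \<epsilon> = wc (Wenc x) \<gamma> \<epsilon>" using e g by (simp add: wc_Wenc t_def)
    qed
    have "F (\<alpha>,t) = z" unfolding F_def ax(3) using E_cong[OF c1 c2] by simp
    thus "z \<in> F ` ?S" using tS by force
  qed
  have KMne: "Field k \<noteq> {}" using Fne .
  have "|Field k \<times> M| =o |M|" using card_of_Times_infinite[OF Minf KMne KM] by blast
  then obtain j where j: "inj_on j (Field k \<times> M)" "j ` (Field k \<times> M) \<subseteq> M"
    using card_of_ordLeq[of "Field k \<times> M" M] ordIso_imp_ordLeq by blast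
  have fib: "\<forall>\<alpha>\<in>Field k. |underS k \<alpha> \<rightarrow>\<^sub>E (Field k \<times> M)| \<le>o |(\<lambda>_. M) \<alpha>|"
  proof
    fix \<alpha> assume a: "\<alpha> \<in> Field k"
    let ?G = "\<lambda>t. restrict (\<lambda>\<delta>. j (t \<delta>)) (underS k \<alpha>)"
    have "inj_on ?G (underS k \<alpha> \<rightarrow>\<^sub>E (Field k \<times> M))"
    proof (rule inj_onI)
      fix t t' assume t: "t \<in> underS k \<alpha> \<rightarrow>\<^sub>E (Field k \<times> M)" "t' \<in> underS k \<alpha> \<rightarrow>\<^sub>E (Field k \<times> M)"
        and e: "?G t = ?G t'"
      show "t = t'"
      proof
        fix \<delta> show "t \<delta> = t' \<delta>"
        proof (cases "\<delta> \<in> underS k \<alpha>")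
          case True
          have "j (t \<delta>) = j (t' \<delta>)" using e True by (metis restrict_apply')
          moreover have "t \<delta> \<in> Field k \<times> M" "t' \<delta> \<in> Field k \<times> M" using t True by blast+
          ultimately show ?thesis using j(1) inj_onD by metis
        next
          case False thus ?thesis using t by (metis PiE_arb)
        qed
      qed
    qed
    moreover have "?G ` (underS k \<alpha> \<rightarrow>\<^sub>E (Field k \<times> M)) \<subseteq> underS k \<alpha> \<rightarrow>\<^sub>E M"
      using j(2) by (auto simp: PiE_iff)
    ultimately have "|underS k \<alpha> \<rightarrow>\<^sub>E (Field k \<times> M)| \<le>o |underS k \<alpha> \<rightarrow>\<^sub>E M|"
      using card_of_ordLeq by blast
    thus "|underS k \<alpha> \<rightarrow>\<^sub>E (Field k \<times> M)| \<le>o |(\<lambda>_. M) \<alpha>|"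
      using h a ordLeq_transitive by fastforce
  qed
  have "|?S| \<le>o |SIGMA \<alpha>:Field k. (\<lambda>_. M) \<alpha>|" by (rule card_of_Sigma_mono1[OF fib])
  hence "|?S| \<le>o |Field k \<times> M|" by simp
  hence SM: "|?S| \<le>o |M|" using \<open>|Field k \<times> M| =o |M|\<close> ordLeq_ordIso_trans by blast
  have XM: "|?X| \<le>o |M|"
    using ordLeq_transitive[OF card_of_mono1[OF XS] ordLeq_transitive[OF card_of_image SM]] .
  have ZM: "|zt ` M| =o |M|"
    using card_of_ordIso[of "zt ` M" M] zt_inj bij_betw_inv_into inj_on_imp_bij_betw by blast
  have "|?X \<union> zt ` M| \<le>o |M|"
    by (rule card_of_Un_ordLeq_infinite_Field)
      (use Minf XM ordIso_imp_ordLeq[OF ZM] card_of_Card_order[of M] in \<open>simp_all add: Field_card_of\<close>)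
  moreover have "|M| \<le>o |?X \<union> zt ` M|"
    using ordLeq_transitive[OF ordIso_imp_ordLeq[OF ordIso_symmetric[OF ZM]] card_of_mono1[of "zt ` M" "?X \<union> zt ` M"]]
    by blast
  ultimately show ?thesis using ordIso_iff_ordLeq by blast
qed

end


lemma gsD0: "p \<in> gbaire_space k V \<Longrightarrow> \<xi> \<in> Field k \<Longrightarrow> p \<xi> \<in> V"
  unfolding gbaire_space_def by auto

lemma Sigma11_empty: "Sigma11 k {}"
  unfolding Sigma11_def by (intro exI[of _ "{}"]) simp

theorem proposition1p20:
  fixes k :: "'a rel" and M :: "'b set"
  assumes card: "Card_order k"
    and uncountable: "\<not> countable (Field k)"
    and regular: "regularCard k"
    and mu_lt_kappa: "\<forall>\<alpha>\<in>Field k. (card_of (underS k \<alpha> \<rightarrow>\<^sub>E M), card_of M) \<in> ordLeq"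
    and mu_less_pow: "(card_of M, card_of (Pow (Field k))) \<in> ordLess"
    and small_sets: "\<forall>X. X \<subseteq> gbaire_space k (Field k) \<and> (card_of X, card_of M) \<in> ordIso \<longrightarrow> Sigma11 k X"
  shows "\<forall>A f. closedin (gbaire k M) A \<and>
            continuous_map (subtopology (gbaire k M) A) (gbaire k (Field k)) f
            \<longrightarrow> Sigma11 k (f ` A)"
proof (intro allI impI, elim conjE)
  fix A and f :: "('a \<Rightarrow> 'b) \<Rightarrow> 'a \<Rightarrow> 'a"
  assume Acl: "closedin (gbaire k M) A"
    and fc: "continuous_map (subtopology (gbaire k M) A) (gbaire k (Field k)) f"
  have inf: "\<not> finite (Field k)" using uncountable countable_finite by blast
  interpret gb k using card inf regular by unfold_locales
  have AB: "A \<subseteq> gbaire_space k M" using Acl closed_iff by blast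
  have fA: "f ` A \<subseteq> gbaire_space k (Field k)"
    using fc AB unfolding continuous_map_def topspace_subtopology topspace_gb by blast
  show "Sigma11 k (f ` A)"
  proof (cases "finite M")
    case True
    have single: "m1 = m2" if "m1 \<in> M" "m2 \<in> M" for m1 m2
    proof (rule ccontr)
      assume "m1 \<noteq> m2"
      hence "|Field k| \<le>o |M|" using K_le_M[of m1 M m2] that mu_lt_kappa by blast
      thus False using card_of_ordLeq_finite True inf by blast
    qed
    show ?thesis
    proof (cases "A = {}")
      case True thus ?thesis using Sigma11_empty by simp
    next
      case False
      then obtain x where x: "x \<in> A" by blast
      have xB: "x \<in> gbaire_space k M" using x AB by blast
      have eq: "x' = x" if "x' \<in> A" for x'
      proof
        fix \<gamma> show "x' \<gamma> = x \<gamma>"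
        proof (cases "\<gamma> \<in> Field k")
          case True
          have "x' \<in> gbaire_space k M" using that AB by blast
          thus ?thesis using single gsD0 xB True by (metis)
        next
          case False
          have "x' \<in> gbaire_space k M" using that AB by blast
          thus ?thesis using xB False unfolding gbaire_space_def by (metis PiE_arb)
        qed
      qed
      hence fAx: "f ` A = {f x}" using x by blast
      obtain \<gamma> where g: "\<gamma> \<in> Field k" using Fne by blast
      have mM: "x \<gamma> \<in> M" using gsD0[OF xB g] .
      hence Mx: "M = {x \<gamma>}" using single by blast
      have "bij_betw (\<lambda>_. x \<gamma>) {f x} M" unfolding Mx by (simp add: bij_betw_def)
      hence "|{f x}| =o |M|" using card_of_ordIso by blast
      moreover have "{f x} \<subseteq> gbaire_space k (Field k)" using fA x by blast
      ultimately show ?thesis using small_sets fAx by simp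
    qed
  next
    case Minf: False
    have "M \<noteq> {}" using Minf by auto
    then obtain m1 where m1: "m1 \<in> M" by blast
    have "infinite (M - {m1})" using Minf by simp
    hence "M - {m1} \<noteq> {}" by (metis finite.emptyI)
    then obtain m2 where m2: "m2 \<in> M - {m1}" by blast
    have m: "m1 \<in> M" "m2 \<in> M" "m1 \<noteq> m2" using m1 m2 by auto
    have KM: "|Field k| \<le>o |M|" using K_le_M[OF m] mu_lt_kappa by blast
    obtain \<pi> where pi: "bij_betw \<pi> (Field k \<times> Field k) (Field k)" using pairing by blast
    obtain g :: "nat \<Rightarrow> 'a" where g: "inj g" "range g \<subseteq> Field k" using infinite_countable_subset[OF inf] by blast
    obtain c0 where c0: "inj_on c0 M" "c0 ` M \<subseteq> gbaire_space k (Field k)" using code_inj mu_less_pow by blast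
    interpret constr k M \<pi> "g 0" "g 1" "g 2" "g 3" c0
      by unfold_locales (use pi g c0 in \<open>auto simp: inj_eq\<close>)
    let ?X = "{E \<alpha> (f x) (Wenc x) | \<alpha> x. \<alpha> \<in> Field k \<and> x \<in> A} \<union> zt ` M"
    have XB: "?X \<subseteq> gbaire_space k (Field k)"
    proof
      fix z assume "z \<in> ?X"
      thus "z \<in> gbaire_space k (Field k)"
      proof
        assume "z \<in> {E \<alpha> (f x) (Wenc x) | \<alpha> x. \<alpha> \<in> Field k \<and> x \<in> A}"
        then obtain \<alpha> x where ax: "\<alpha> \<in> Field k" "x \<in> A" "z = E \<alpha> (f x) (Wenc x)" by blast
        show ?thesis unfolding ax(3) using E_in[OF ax(1)] fA ax(2) Wenc_in AB by blast
      next
        assume "z \<in> zt ` M" thus ?thesis using zt_in by blast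
      qed
    qed
    have "|?X| =o |M|" using count_X[OF Minf KM mu_lt_kappa AB fA] .
    hence "Sigma11 k ?X" using small_sets XB by blast
    then obtain D where D: "closedin (prod_topology (gbaire k (Field k)) (gbaire k (Field k))) D" "?X = fst ` D"
      unfolding Sigma11_def by blast
    show ?thesis using main_constr[OF Acl fc D(1) D(2)[symmetric]] .
  qed
qed



end
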